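(* If $(X;\leq)$ is a representable poset, then each order component $Y$ of $X$ (with the induced order) is compact with respect to its interval topology $\tau_i(Y)$.
   Context: A poset is representable if it is order-isomorphic to the poset of prime ideals (ordered by inclusion) of a bounded distributive lattice; equivalently, iff there is a topology $\tau$ on $X$ with $(X;\tau)$ compact and such that whenever $x\not\geq y$ there is a clopen down-set containing $x$ but not $y$ (a Priestley space). For a poset $X$, let $R=\{(x,y): x\le y \text{ or } y\le x\}$ and $R'$ its transitive closure; an order component of $X$ is an equivalence class of $R'$. The interval topology $\tau_i(Y)$ of a poset $Y$ is the topology with subbase $\{Y\setminus (y]: y\in Y\}\cup\{Y\setminus [y): y\in Y\}$, where $(y]=\{z\in Y: z\le y\}$, $[y)=\{z\in Y: z\ge y\}$. *)

theory Defs
  imports "HOL-Analysis.Analysis"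
begin

text \<open>A poset is modelled as a type with a partial order (class order).
  Representable = admits a Priestley topology (compact, and order-separated by
  clopen down-sets).\<close>

definition priestley_space :: "'a::order topology \<Rightarrow> bool" where
  "priestley_space T \<longleftrightarrow> topspace T = UNIV \<and> compact_space T \<and>
     (\<forall>x y. \<not> (y \<le> x) \<longrightarrow>
        (\<exists>U. openin T U \<and> closedin T U \<and> (\<forall>u\<in>U. \<forall>v. v \<le> u \<longrightarrow> v \<in> U)
             \<and> x \<in> U \<and> y \<notin> U))"

definition representable :: "'a::order itself \<Rightarrow> bool" where
  "representable _ \<longleftrightarrow> (\<exists>T::'a topology. priestley_space T)"

definition comparable_rel :: "('a::order \<times> 'a) set" where
  "comparable_rel = {(x, y). x \<le> y \<or> y \<le> x}"

definition order_components :: "'a::order set set" where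
  "order_components = UNIV // (comparable_rel\<^sup>+)"

definition interval_subbase :: "'a::order set \<Rightarrow> 'a set set" where
  "interval_subbase Y = {Y - {z\<in>Y. z \<le> y} | y. y \<in> Y} \<union> {Y - {z\<in>Y. y \<le> z} | y. y \<in> Y}"

definition interval_topology :: "'a::order set \<Rightarrow> 'a topology" where
  "interval_topology Y =
     topology (arbitrary union_of ((finite intersection_of (\<lambda>S. S \<in> interval_subbase Y)) relative_to Y))"

end

theory Submission
  imports Defs
begin

lemma comp_closed:
  assumes "Y \<in> (order_components :: 'a::order set set)" "y \<in> Y" "z \<le> y \<or> y \<le> z"
  shows "z \<in> Y"
proof -
  obtain x where Y: "Y = comparable_rel\<^sup>+ `` {x}"
    using assms(1) unfolding order_components_def quotient_def by blast
  have "(x, y) \<in> comparable_rel\<^sup>+" using Y assms(2) by blast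
  moreover have "(y, z) \<in> comparable_rel" using assms(3) unfolding comparable_rel_def by auto
  ultimately have "(x, z) \<in> comparable_rel\<^sup>+" by (meson trancl.trancl_into_trancl)
  then show ?thesis using Y by blast
qed

lemma lift_sub:
  fixes T :: "'a::order topology"
  assumes P: "priestley_space T" and Y: "Y \<in> order_components"
    and S: "S \<in> interval_subbase Y"
  shows "\<exists>L. openin T L \<and> S = Y \<inter> L \<and> -Y \<subseteq> L"
proof -
  have top: "topspace T = UNIV" using P unfolding priestley_space_def by blast
  have sep: "\<And>x y. \<not> y \<le> x \<Longrightarrow> \<exists>U. openin T U \<and> closedin T U \<and> (\<forall>u\<in>U. \<forall>v. v \<le> u \<longrightarrow> v \<in> U) \<and> x \<in> U \<and> y \<notin> U"
    using P unfolding priestley_space_def by blast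
  obtain y where y: "y \<in> Y" and Sd: "S = Y - {z\<in>Y. z \<le> y} \<or> S = Y - {z\<in>Y. y \<le> z}"
    using S unfolding interval_subbase_def by blast
  have o1: "openin T (- {z. z \<le> y})"
  proof (subst openin_subopen, intro ballI)
    fix w assume "w \<in> - {z. z \<le> y}"
    then obtain U where U: "closedin T U" "\<forall>u\<in>U. \<forall>v. v \<le> u \<longrightarrow> v \<in> U" "y \<in> U" "w \<notin> U"
      using sep[of w y] by auto
    have "openin T (- U)" using U(1) top by (metis Compl_eq_Diff_UNIV closedin_def)
    moreover have "- U \<subseteq> - {z. z \<le> y}" using U(2,3) by blast
    ultimately show "\<exists>T'. openin T T' \<and> w \<in> T' \<and> T' \<subseteq> - {z. z \<le> y}" using U(4) by blast
  qed
  have o2: "openin T (- {z. y \<le> z})"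
  proof (subst openin_subopen, intro ballI)
    fix w assume "w \<in> - {z. y \<le> z}"
    then obtain U where U: "openin T U" "\<forall>u\<in>U. \<forall>v. v \<le> u \<longrightarrow> v \<in> U" "w \<in> U" "y \<notin> U"
      using sep[of y w] by auto
    moreover have "U \<subseteq> - {z. y \<le> z}" using U(2,4) by blast
    ultimately show "\<exists>T'. openin T T' \<and> w \<in> T' \<and> T' \<subseteq> - {z. y \<le> z}" by blast
  qed
  have c1: "- Y \<subseteq> - {z. z \<le> y}" using comp_closed[OF Y y] by blast
  have c2: "- Y \<subseteq> - {z. y \<le> z}" using comp_closed[OF Y y] by blast
  show ?thesis
  proof (cases "S = Y - {z\<in>Y. z \<le> y}")
    case True
    then show ?thesis using o1 c1 by (intro exI[of _ "- {z. z \<le> y}"]) auto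
  next
    case False
    then have "S = Y - {z\<in>Y. y \<le> z}" using Sd by blast
    then show ?thesis using o2 c2 by (intro exI[of _ "- {z. y \<le> z}"]) auto
  qed
qed

lemma lift_fin:
  fixes T :: "'a::order topology"
  assumes P: "priestley_space T" and Y: "Y \<in> order_components"
  shows "finite \<S> \<Longrightarrow> \<S> \<subseteq> interval_subbase Y \<Longrightarrow> \<exists>L. openin T L \<and> Y \<inter> \<Inter>\<S> = Y \<inter> L \<and> -Y \<subseteq> L"
proof (induction \<S> rule: finite_induct)
  case empty
  have "topspace T = UNIV" using P unfolding priestley_space_def by blast
  then show ?case by (metis Inter_empty openin_topspace subset_UNIV)
next
  case (insert S F)
  then obtain L where L: "openin T L" "Y \<inter> \<Inter>F = Y \<inter> L" "-Y \<subseteq> L" by auto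
  obtain L' where L': "openin T L'" "S = Y \<inter> L'" "-Y \<subseteq> L'"
    using lift_sub[OF P Y] insert.prems by blast
  show ?case
    by (rule exI[of _ "L' \<inter> L"]) (use L L' in auto)
qed

lemma lift_open:
  fixes T :: "'a::order topology"
  assumes P: "priestley_space T" and Y: "Y \<in> order_components"
    and U: "openin (interval_topology Y) U"
  shows "\<exists>L. openin T L \<and> U = Y \<inter> L \<and> (U \<noteq> {} \<longrightarrow> -Y \<subseteq> L)"
proof -
  have "(arbitrary union_of (finite intersection_of (\<lambda>S. S \<in> interval_subbase Y) relative_to Y)) U"
    using U unfolding interval_topology_def openin_subbase .
  then obtain \<V> where V: "\<V> \<subseteq> Collect (finite intersection_of (\<lambda>S. S \<in> interval_subbase Y) relative_to Y)"
    "\<Union>\<V> = U"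
    unfolding union_of_def arbitrary_def by blast
  have "\<forall>B\<in>\<V>. \<exists>L. openin T L \<and> B = Y \<inter> L \<and> -Y \<subseteq> L"
  proof
    fix B assume "B \<in> \<V>"
    then have "(finite intersection_of (\<lambda>S. S \<in> interval_subbase Y) relative_to Y) B" using V by blast
    then obtain \<S> where S: "finite \<S>" "\<S> \<subseteq> interval_subbase Y" "B = Y \<inter> \<Inter>\<S>"
      unfolding relative_to_def intersection_of_def by auto
    then show "\<exists>L. openin T L \<and> B = Y \<inter> L \<and> -Y \<subseteq> L" using lift_fin[OF P Y S(1,2)] by auto
  qed
  then obtain g where g: "\<And>B. B \<in> \<V> \<Longrightarrow> openin T (g B) \<and> B = Y \<inter> g B \<and> -Y \<subseteq> g B"
    by metis
  show ?thesis
  proof (intro exI[of _ "\<Union>(g ` \<V>)"] conjI impI)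
    show "openin T (\<Union>(g ` \<V>))" using g by auto
    show "U = Y \<inter> \<Union>(g ` \<V>)" using g V(2) by blast
    assume "U \<noteq> {}"
    then obtain B where "B \<in> \<V>" using V(2) by blast
    then show "-Y \<subseteq> \<Union>(g ` \<V>)" using g by blast
  qed
qed

theorem lemma2p2:
  assumes "representable TYPE('a::order)"
    and "Y \<in> (order_components :: 'a set set)"
  shows "compact_space (interval_topology Y)"
proof -
  obtain T :: "'a topology" where P: "priestley_space T"
    using assms(1) unfolding representable_def by blast
  have top: "topspace T = UNIV" and cT: "compact_space T" using P unfolding priestley_space_def by auto
  have topY: "topspace (interval_topology Y) = Y" unfolding interval_topology_def by simp
  show ?thesis unfolding compact_space_alt topY
  proof (intro allI impI)
    fix \<U> assume H: "(\<forall>U\<in>\<U>. openin (interval_topology Y) U) \<and> Y \<subseteq> \<Union>\<U>"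
    show "\<exists>\<F>. finite \<F> \<and> \<F> \<subseteq> \<U> \<and> Y \<subseteq> \<Union>\<F>"
    proof (cases "Y = {}")
      case True then show ?thesis by blast
    next
      case False
      have "\<forall>U\<in>\<U>. \<exists>L. openin T L \<and> U = Y \<inter> L \<and> (U \<noteq> {} \<longrightarrow> -Y \<subseteq> L)"
        using lift_open[OF P assms(2)] H by blast
      then obtain h where h: "\<And>U. U \<in> \<U> \<Longrightarrow> openin T (h U) \<and> U = Y \<inter> h U \<and> (U \<noteq> {} \<longrightarrow> -Y \<subseteq> h U)"
        by metis
      obtain U0 where U0: "U0 \<in> \<U>" "U0 \<noteq> {}" using False H by blast
      have cov: "topspace T \<subseteq> \<Union>(h ` \<U>)"
      proof
        fix x assume "x \<in> topspace T"
        show "x \<in> \<Union>(h ` \<U>)"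
        proof (cases "x \<in> Y")
          case True
          then obtain U where "U \<in> \<U>" "x \<in> U" using H by blast
          then show ?thesis using h by blast
        next
          case False
          then show ?thesis using h[OF U0(1)] U0 by blast
        qed
      qed
      obtain F' where F': "finite F'" "F' \<subseteq> h ` \<U>" "topspace T \<subseteq> \<Union>F'"
        using cT cov h unfolding compact_space_alt by (metis (no_types, lifting) imageE)
      obtain F where F: "F \<subseteq> \<U>" "finite F" "F' = h ` F"
        using finite_subset_image[OF F'(1,2)] by blast
      have "Y \<subseteq> \<Union>F"
      proof
        fix y assume "y \<in> Y"
        then obtain U where "U \<in> F" "y \<in> h U" using F'(3) F(3) top by auto
        then show "y \<in> \<Union>F" using h F(1) \<open>y \<in> Y\<close> by blast
      qed
      then show ?thesis using F by blast
    qed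
  qed
qed

end
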